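(* Let $U\in\mathbb{R}^{d\times n}$ be a frame, $z\in\mathbb{R}^n_{++}$ and $T\subseteq[n]$. Then the progress function $h:=h^{U,z}_T$ is (non-strictly) increasing and concave on $(0,\infty)$.
   Context: A frame is a full row rank matrix $U\in\mathbb{R}^{d\times n}$; $Z=\mathrm{diag}(z)$; $U_T,Z_T$ restrictions to $T$; $\bar T=[n]\setminus T$. $h^{U,z}_T(\alpha):=\mathrm{tr}[\alpha U_TZ_TU_T^{\mathsf T}(U_{\bar T}Z_{\bar T}U_{\bar T}^{\mathsf T}+\alpha U_TZ_TU_T^{\mathsf T})^{-1}]$, the sum over $j\in T$ of the leverage scores $\mathrm{lev}^U_j(z\circ(1_{\bar T}+\alpha1_T))$, where $\mathrm{lev}^U_j(w)=w_ju_j^{\mathsf T}(U\,\mathrm{diag}(w)U^{\mathsf T})^{-1}u_j$. *)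

theory Defs
  imports "HOL-Analysis.Analysis"
begin

definition frame :: "real^'n^'d \<Rightarrow> bool" where
  "frame U \<longleftrightarrow> rank U = CARD('d)"

definition diag_mat :: "real^'n \<Rightarrow> real^'n^'n" where
  "diag_mat w = (\<chi> i j. if i = j then w $ i else 0)"

text \<open>U_T Z_T U_T^T, written as U diag(z restricted to T, zero elsewhere) U^T,
  i.e. the sum over j in T of z_j u_j u_j^T.\<close>
definition restr_gram :: "real^'n^'d \<Rightarrow> real^'n \<Rightarrow> 'n set \<Rightarrow> real^'d^'d" where
  "restr_gram U z T = U ** diag_mat (\<chi> j. if j \<in> T then z $ j else 0) ** transpose U"

definition progress_fun :: "real^'n^'d \<Rightarrow> real^'n \<Rightarrow> 'n set \<Rightarrow> real \<Rightarrow> real" where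
  "progress_fun U z T \<alpha> =
     trace ((\<alpha> *\<^sub>R restr_gram U z T) **
            matrix_inv (restr_gram U z (- T) + \<alpha> *\<^sub>R restr_gram U z T))"

end

theory Submission
  imports Defs
begin

lemma minv:
  fixes X :: "real^'d^'d"
  assumes "invertible X"
  shows "X ** matrix_inv X = mat 1" "matrix_inv X ** X = mat 1"
proof -
  have "\<exists>A'. X ** A' = mat 1 \<and> A' ** X = mat 1" using assms by (simp add: invertible_def)
  from someI_ex[OF this] show "X ** matrix_inv X = mat 1" "matrix_inv X ** X = mat 1"
    by (simp_all add: matrix_inv_def)
qed

definition gram :: "real^'n^'d \<Rightarrow> real^'n \<Rightarrow> real^'d^'d" where
  "gram U w = U ** diag_mat w ** transpose U"

lemma gram_entry: "gram U w $ i $ k = (\<Sum>j\<in>UNIV. U$i$j * w$j * U$k$j)"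
  unfolding gram_def matrix_matrix_mult_def diag_mat_def transpose_def
  by (simp add: if_distrib sum.delta cong: if_cong)

lemma gram_bil: "x \<bullet> (gram U w *v y) = (\<Sum>j\<in>UNIV. w$j * ((\<Sum>i\<in>UNIV. U$i$j * x$i) * (\<Sum>i\<in>UNIV. U$i$j * y$i)))"
proof -
  have "x \<bullet> (gram U w *v y) = (\<Sum>i\<in>UNIV. \<Sum>k\<in>UNIV. \<Sum>j\<in>UNIV. x$i * (U$i$j * w$j * U$k$j) * y$k)"
    by (simp add: inner_vec_def matrix_vector_mult_def gram_entry sum_distrib_left sum_distrib_right mult_ac)
  also have "\<dots> = (\<Sum>i\<in>UNIV. \<Sum>j\<in>UNIV. \<Sum>k\<in>UNIV. x$i * (U$i$j * w$j * U$k$j) * y$k)"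
    by (rule sum.cong[OF refl], rule sum.swap)
  also have "\<dots> = (\<Sum>j\<in>UNIV. \<Sum>i\<in>UNIV. \<Sum>k\<in>UNIV. x$i * (U$i$j * w$j * U$k$j) * y$k)"
    by (rule sum.swap)
  also have "\<dots> = (\<Sum>j\<in>UNIV. w$j * ((\<Sum>i\<in>UNIV. U$i$j * x$i) * (\<Sum>i\<in>UNIV. U$i$j * y$i)))"
    by (unfold sum_product, unfold sum_distrib_left, intro sum.cong refl, simp add: mult_ac)
  finally show ?thesis .
qed

lemma gram_symm: "x \<bullet> (gram U w *v y) = y \<bullet> (gram U w *v x)"
  by (simp add: gram_bil mult_ac)

lemma gram_trace: "trace (gram U w ** X) = (\<Sum>j\<in>UNIV. w$j * ((\<chi> i. U$i$j) \<bullet> (X *v (\<chi> i. U$i$j))))"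
proof -
  have "trace (gram U w ** X) = (\<Sum>i\<in>UNIV. \<Sum>k\<in>UNIV. \<Sum>j\<in>UNIV. U$i$j * w$j * U$k$j * X$k$i)"
    by (simp add: trace_def matrix_matrix_mult_def gram_entry sum_distrib_right)
  also have "\<dots> = (\<Sum>i\<in>UNIV. \<Sum>j\<in>UNIV. \<Sum>k\<in>UNIV. U$i$j * w$j * U$k$j * X$k$i)"
    by (rule sum.cong[OF refl], rule sum.swap)
  also have "\<dots> = (\<Sum>j\<in>UNIV. \<Sum>i\<in>UNIV. \<Sum>k\<in>UNIV. U$i$j * w$j * U$k$j * X$k$i)"
    by (rule sum.swap)
  also have "\<dots> = (\<Sum>j\<in>UNIV. \<Sum>k\<in>UNIV. \<Sum>i\<in>UNIV. U$i$j * w$j * U$k$j * X$k$i)"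
    by (rule sum.cong[OF refl], rule sum.swap)
  also have "\<dots> = (\<Sum>j\<in>UNIV. w$j * ((\<chi> i. U$i$j) \<bullet> (X *v (\<chi> i. U$i$j))))"
    by (simp add: inner_vec_def matrix_vector_mult_def sum_distrib_left sum_distrib_right mult_ac)
  finally show ?thesis .
qed

lemma key_ineq:
  fixes X :: "real^'d^'d"
  assumes inv: "invertible X" and sym: "\<And>a b. a \<bullet> (X *v b) = b \<bullet> (X *v a)"
    and psd: "\<And>a. 0 \<le> a \<bullet> (X *v a)"
  shows "2 * (x \<bullet> y) - y \<bullet> (X *v y) \<le> x \<bullet> (matrix_inv X *v x)"
    and "2 * (x \<bullet> (matrix_inv X *v x)) - (matrix_inv X *v x) \<bullet> (X *v (matrix_inv X *v x))
          = x \<bullet> (matrix_inv X *v x)"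
proof -
  define w where "w = matrix_inv X *v x"
  have Xw: "X *v w = x" unfolding w_def
    by (simp add: matrix_vector_mul_assoc minv[OF inv])
  have "0 \<le> (y - w) \<bullet> (X *v (y - w))" by (rule psd)
  also have "\<dots> = y \<bullet> (X *v y) - y \<bullet> (X *v w) - w \<bullet> (X *v y) + w \<bullet> (X *v w)"
    by (simp add: matrix_vector_mult_diff_distrib inner_diff_left inner_diff_right)
  also have "\<dots> = y \<bullet> (X *v y) - 2 * (x \<bullet> y) + x \<bullet> w"
    using sym[of w y] Xw by (simp add: inner_commute)
  finally show "2 * (x \<bullet> y) - y \<bullet> (X *v y) \<le> x \<bullet> (matrix_inv X *v x)"
    by (simp add: w_def)
  show "2 * (x \<bullet> (matrix_inv X *v x)) - (matrix_inv X *v x) \<bullet> (X *v (matrix_inv X *v x))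
          = x \<bullet> (matrix_inv X *v x)"
    using Xw by (simp add: w_def[symmetric] inner_commute)
qed

theorem corollary2p17:
  fixes U :: "real^'n^'d" and z :: "real^'n" and T :: "'n set"
  assumes "frame U"
    and "\<forall>j. z $ j > 0"
  shows "mono_on {0<..} (progress_fun U z T) \<and> concave_on {0<..} (progress_fun U z T)"
proof -
  define zA :: "real^'n" where "zA = (\<chi> j. if j \<in> T then 0 else z$j)"
  define zB :: "real^'n" where "zB = (\<chi> j. if j \<in> T then z$j else 0)"
  define A where "A = gram U zA"
  define B where "B = gram U zB"
  define M where "M = (\<lambda>a::real. A + a *\<^sub>R B)"
  define qa where "qa = (\<lambda>y::real^'d. y \<bullet> (A *v y))"
  define qb where "qb = (\<lambda>y::real^'d. y \<bullet> (B *v y))"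
  define c where "c = (\<lambda>(y::real^'d) j. (\<Sum>i\<in>UNIV. U$i$j * y$i))"
  have RA: "restr_gram U z (- T) = A"
    unfolding A_def restr_gram_def gram_def zA_def by (rule arg_cong[where f="\<lambda>v. U ** diag_mat v ** transpose U"]) (simp add: vec_eq_iff)
  have RB: "restr_gram U z T = B"
    unfolding B_def restr_gram_def gram_def zB_def by simp
  have zA0: "0 \<le> zA$j" for j using assms(2) by (auto simp: zA_def less_imp_le)
  have zB0: "0 \<le> zB$j" for j using assms(2) by (auto simp: zB_def less_imp_le)
  have qa_eq: "qa y = (\<Sum>j\<in>UNIV. zA$j * (c y j)^2)" for y
    by (simp add: qa_def A_def gram_bil c_def power2_eq_square)
  have qb_eq: "qb y = (\<Sum>j\<in>UNIV. zB$j * (c y j)^2)" for y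
    by (simp add: qb_def B_def gram_bil c_def power2_eq_square)
  have qa0: "0 \<le> qa y" for y unfolding qa_eq by (intro sum_nonneg mult_nonneg_nonneg zA0) simp
  have qb0: "0 \<le> qb y" for y unfolding qb_eq by (intro sum_nonneg mult_nonneg_nonneg zB0) simp
  have Mq: "y \<bullet> (M a *v y) = qa y + a * qb y" for a y
    by (simp add: M_def qa_def qb_def matrix_vector_mult_add_rdistrib scaleR_matrix_vector_assoc[symmetric] inner_add_right)
  have Msym: "x \<bullet> (M a *v y) = y \<bullet> (M a *v x)" for a x y
    using gram_symm[of x U zA y] gram_symm[of x U zB y]
    by (simp add: M_def A_def B_def matrix_vector_mult_add_rdistrib scaleR_matrix_vector_assoc[symmetric] inner_add_right)
  have injU: "inj ((*v) (transpose U))"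
    using assms(1) by (simp add: frame_def full_rank_injective[symmetric] rank_transpose)
  have cU: "c y j = (transpose U *v y) $ j" for y j
    by (simp add: c_def matrix_vector_mult_def transpose_def mult_ac)
  have Mpd: "0 < y \<bullet> (M a *v y)" if "a > 0" "y \<noteq> 0" for a y
  proof -
    have "transpose U *v y \<noteq> 0"
      using injU that(2) by (metis inj_eq matrix_vector_mult_0_right)
    then obtain j where j: "c y j \<noteq> 0" by (auto simp: cU vec_eq_iff)
    have eq: "y \<bullet> (M a *v y) = (\<Sum>j\<in>UNIV. (zA$j + a * zB$j) * (c y j)^2)"
      by (simp add: Mq qa_eq qb_eq sum_distrib_left sum.distrib[symmetric] algebra_simps)
    have pos: "0 < zA$j + a * zB$j" for j
      using assms(2) that(1) by (auto simp: zA_def zB_def)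
    have p1: "0 < (zA$j + a * zB$j) * (c y j)^2" using j pos[of j] by simp
    have p2: "0 \<le> (zA$i + a * zB$i) * (c y i)^2" for i using pos[of i] by simp
    show ?thesis unfolding eq
      by (rule sum_pos2[of UNIV j]) (use p1 p2 in auto)
  qed
  have Minv: "invertible (M a)" if "a > 0" for a
  proof -
    have "\<forall>x. M a *v x = 0 \<longrightarrow> x = 0"
      using Mpd[OF that] by (metis inner_zero_right less_irrefl)
    then show ?thesis by (simp add: invertible_left_inverse matrix_left_invertible_ker)
  qed
  define q where "q = (\<lambda>a u. u \<bullet> (matrix_inv (M a) *v u))"
  have Mpsd: "0 \<le> y \<bullet> (M a *v y)" if "a > 0" for a y
    using Mpd[OF that, of y] by (cases "y = 0") auto
  have qI: "2 * (u \<bullet> y) - qa y - a * qb y \<le> q a u" if "a > 0" for a u y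
    using key_ineq(1)[OF Minv[OF that] Msym Mpsd[OF that], of u y] by (simp add: q_def Mq)
  have qE: "\<exists>y. q a u = 2 * (u \<bullet> y) - qa y - a * qb y" if "a > 0" for a u
    unfolding q_def
    by (intro exI[of _ "matrix_inv (M a) *v u"]) (use key_ineq(2)[OF Minv[OF that] Msym Mpsd[OF that], of u] in \<open>simp add: Mq; linarith\<close>)
  have qmono: "q b u \<le> q a u" if ab: "0 < a" "a \<le> b" for a b u
  proof -
    obtain y where y: "q b u = 2 * (u \<bullet> y) - qa y - b * qb y" using qE[of b u] ab by force
    have "b * qb y \<ge> a * qb y" using ab qb0[of y] by (simp add: mult_right_mono)
    then show ?thesis using y qI[OF ab(1), of u y] by linarith
  qed
  have qconv: "q (s * a + t * b) u \<le> s * q a u + t * q b u"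
    if ab: "0 < a" "0 < b" "0 \<le> s" "0 \<le> t" "s + t = 1" for a b s t u
  proof -
    have g: "0 < s * a + t * b"
    proof (cases "s = 0")
      case True then show ?thesis using ab by simp
    next
      case False then show ?thesis using ab by (simp add: add_pos_nonneg)
    qed
    obtain y where y: "q (s * a + t * b) u = 2 * (u \<bullet> y) - qa y - (s * a + t * b) * qb y"
      using qE[OF g] by blast
    have "s * (2 * (u \<bullet> y) - qa y - a * qb y) \<le> s * q a u"
      using qI[OF ab(1)] ab(3) by (simp add: mult_left_mono)
    moreover have "t * (2 * (u \<bullet> y) - qa y - b * qb y) \<le> t * q b u"
      using qI[OF ab(2)] ab(4) by (simp add: mult_left_mono)
    moreover have "2 * (u \<bullet> y) - qa y - (s * a + t * b) * qb y
       = s * (2 * (u \<bullet> y) - qa y - a * qb y) + t * (2 * (u \<bullet> y) - qa y - b * qb y)"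
    proof -
      have "s * (2 * (u \<bullet> y) - qa y - a * qb y) + t * (2 * (u \<bullet> y) - qa y - b * qb y)
          = (s + t) * (2 * (u \<bullet> y) - qa y) - (s * a + t * b) * qb y"
        by (simp add: algebra_simps)
      then show ?thesis using ab(5) by simp
    qed
    ultimately show ?thesis using y by linarith
  qed
  define col where "col = (\<lambda>j. (\<chi> i. U$i$j) :: real^'d)"
  have h_eq: "progress_fun U z T a = real CARD('d) - (\<Sum>j\<in>UNIV. zA$j * q a (col j))"
    if "a > 0" for a
  proof -
    have "a *\<^sub>R B = M a - A" by (simp add: M_def)
    then have "progress_fun U z T a = trace ((M a - A) ** matrix_inv (M a))"
      by (simp add: progress_fun_def RA RB M_def)
    also have "\<dots> = trace (M a ** matrix_inv (M a)) - trace (A ** matrix_inv (M a))"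
    proof -
      have "(M a - A) ** matrix_inv (M a) = M a ** matrix_inv (M a) - A ** matrix_inv (M a)"
        by (simp add: vec_eq_iff matrix_matrix_mult_def sum_subtractf left_diff_distrib)
      then show ?thesis by (simp add: trace_sub)
    qed
    also have "\<dots> = real CARD('d) - (\<Sum>j\<in>UNIV. zA$j * q a (col j))"
      by (simp add: minv[OF Minv[OF that]] trace_I A_def gram_trace q_def col_def)
    finally show ?thesis .
  qed
  have mono: "mono_on {0<..} (progress_fun U z T)"
  proof (rule mono_onI)
    fix a b :: real assume ab: "a \<in> {0<..}" "b \<in> {0<..}" "a \<le> b"
    have "(\<Sum>j\<in>UNIV. zA$j * q b (col j)) \<le> (\<Sum>j\<in>UNIV. zA$j * q a (col j))"
      using ab by (intro sum_mono mult_left_mono qmono zA0) auto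
    then show "progress_fun U z T a \<le> progress_fun U z T b"
      using ab by (simp add: h_eq)
  qed
  have conc: "concave_on {0<..} (progress_fun U z T)"
    unfolding concave_on_iff
  proof (intro conjI ballI allI impI)
    show "convex ({0<..} :: real set)" by (rule convex_real_interval)
    fix a b s t :: real assume ab: "a \<in> {0<..}" "b \<in> {0<..}" and st: "0 \<le> s" "0 \<le> t" "s + t = 1"
    have g: "0 < s * a + t * b"
      using ab st by (cases "s = 0") (auto simp: add_pos_nonneg)
    have "(\<Sum>j\<in>UNIV. zA$j * q (s * a + t * b) (col j))
        \<le> (\<Sum>j\<in>UNIV. zA$j * (s * q a (col j) + t * q b (col j)))"
      using ab st by (intro sum_mono mult_left_mono qconv zA0) auto
    also have "\<dots> = s * (\<Sum>j\<in>UNIV. zA$j * q a (col j)) + t * (\<Sum>j\<in>UNIV. zA$j * q b (col j))"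
      by (simp add: sum_distrib_left sum.distrib algebra_simps)
    finally have *: "(\<Sum>j\<in>UNIV. zA$j * q (s * a + t * b) (col j))
        \<le> s * (\<Sum>j\<in>UNIV. zA$j * q a (col j)) + t * (\<Sum>j\<in>UNIV. zA$j * q b (col j))" .
    have "s * real CARD('d) + t * real CARD('d) = real CARD('d)"
      using st(3) by (metis distrib_right mult_1)
    then show "s * progress_fun U z T a + t * progress_fun U z T b \<le> progress_fun U z T (s *\<^sub>R a + t *\<^sub>R b)"
      using * ab g by (simp add: h_eq right_diff_distrib)
  qed
  show ?thesis using mono conc by blast
qed

end
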